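(* Let $n \in \mathbb{N}_0$, and let $P(x), Q(x) \in \mathbb{Z}[x]$ be $n$-good polynomials. If $P(x) \equiv Q(x) \pmod 2$, then $P(x) \equiv Q(x) \pmod{2^{n+1}}$.
   Context: For $P, Q, M \in \mathbb{Z}[x]$ with $M \ne 0$, $P \equiv Q \pmod{M}$ means $M$ divides $P - Q$ in $\mathbb{Z}[x]$. For $n \in \mathbb{N}_0$, a polynomial $P(x) \in \mathbb{Z}[x]$ is $n$-good if $P(x^{2^m}) \equiv P(x)^{2^m} \pmod{2^{m+1}}$ for every $m \in \{0, 1, \dots, n\}$. *)

theory Defs
  imports "HOL-Computational_Algebra.Polynomial"
begin

definition poly_cong :: "int poly \<Rightarrow> int poly \<Rightarrow> int poly \<Rightarrow> bool" where
  "poly_cong P Q M \<longleftrightarrow> M dvd (P - Q)"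

definition n_good :: "nat \<Rightarrow> int poly \<Rightarrow> bool" where
  "n_good n P \<longleftrightarrow> (\<forall>m\<in>{0..n}.
     poly_cong (pcompose P (monom 1 (2 ^ m))) (P ^ (2 ^ m)) [:2 ^ (m + 1):])"

end

theory Submission
  imports Defs
begin

lemma coeff_pcompose_monom_mult:
  fixes p :: "int poly"
  assumes "k > 0"
  shows "coeff (pcompose p (monom 1 k)) (i * k) = coeff p i"
proof (induction p arbitrary: i)
  case 0
  then show ?case by simp
next
  case (pCons a p)
  show ?case
  proof (cases i)
    case 0
    then show ?thesis using assms by (simp add: pcompose_pCons coeff_monom_mult)
  next
    case (Suc j)
    have "coeff (monom 1 k * pcompose p (monom 1 k)) (i * k) = coeff (pcompose p (monom 1 k)) (j * k)"
      using Suc by (simp add: coeff_monom_mult)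
    moreover have "coeff [:a:] (i * k) = 0" using Suc assms by (simp add: coeff_pCons split: nat.splits)
    ultimately show ?thesis using Suc assms pCons.IH
      by (simp add: pcompose_pCons)
  qed
qed

lemma sq_step:
  fixes A B :: "int poly"
  assumes "[:2 ^ j:] dvd A - B" "[:2:] dvd A - B" 
  shows "[:2 ^ (j+1):] dvd A^2 - B^2"
proof -
  have "[:2:] dvd (A - B) + [:2:] * B" 
    by (rule dvd_add[OF assms(2) dvd_triv_left])
  moreover have "[:2:] * B = B + B"
  proof -
    have "[:2:] * B = smult (1 + 1) B" by simp
    also have "... = B + B" by (simp only: smult_add_left smult_1_left)
    finally show ?thesis .
  qed
  hence "(A - B) + [:2:] * B = A + B" by simp
  ultimately have s: "[:2:] dvd A + B" by (simp add: add.commute)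
  have "[:2 ^ j:] * [:2:] dvd (A - B) * (A + B)"
    using assms(1) s by (rule mult_dvd_mono)
  moreover have "(A - B) * (A + B) = A^2 - B^2" by (simp add: algebra_simps power2_eq_square)
  moreover have "[:2 ^ j:] * [:2:] = ([:2 ^ (j+1):] :: int poly)" by simp
  ultimately show ?thesis by simp
qed

lemma pow_step:
  fixes A B :: "int poly"
  assumes "[:2:] dvd A - B"
  shows "[:2 ^ (k+1):] dvd A^(2^k) - B^(2^k)"
proof (induction k)
  case 0
  then show ?case using assms by simp
next
  case (Suc k)
  have "[:2:] dvd A^(2^k) - B^(2^k)"
  proof -
    have "(2::int) dvd 2 ^ (k+1)" by simp
    hence "[:2:] dvd ([:2 ^ (k+1):] :: int poly)" by (simp only: const_poly_dvd_const_poly_iff)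
    thus ?thesis using Suc by (rule dvd_trans)
  qed
  from sq_step[OF Suc this] show ?case
    by (simp add: power_mult[symmetric] mult.commute)
qed

theorem lemma3p6:
  fixes n :: nat and P Q :: "int poly"
  assumes "n_good n P" and "n_good n Q"
    and "poly_cong P Q [:2:]"
  shows "poly_cong P Q [:2 ^ (n + 1):]"
proof -
  let ?X = "monom (1::int) (2 ^ n)"
  have hP: "[:2 ^ (n+1):] dvd pcompose P ?X - P ^ (2^n)"
    using assms(1) unfolding n_good_def poly_cong_def by auto
  have hQ: "[:2 ^ (n+1):] dvd pcompose Q ?X - Q ^ (2^n)"
    using assms(2) unfolding n_good_def poly_cong_def by auto
  have hPQ: "[:2 ^ (n+1):] dvd P ^ (2^n) - Q ^ (2^n)"
    using pow_step assms(3) unfolding poly_cong_def by blast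
  have "pcompose (P - Q) ?X = (pcompose P ?X - P ^ (2^n)) + (P ^ (2^n) - Q ^ (2^n)) - (pcompose Q ?X - Q ^ (2^n))"
    by (simp add: pcompose_diff)
  hence d: "[:2 ^ (n+1):] dvd pcompose (P - Q) ?X"
    using hP hQ hPQ by (simp only: dvd_add dvd_diff)
  have "\<forall>i. 2 ^ (n+1) dvd coeff (P - Q) i"
  proof
    fix i
    have "2 ^ (n+1) dvd coeff (pcompose (P - Q) ?X) (i * 2^n)"
      using d const_poly_dvd_iff by blast
    then show "2 ^ (n+1) dvd coeff (P - Q) i"
      by (simp add: coeff_pcompose_monom_mult)
  qed
  then show ?thesis unfolding poly_cong_def by (simp add: const_poly_dvd_iff)
qed

end
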